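(* Let $\mathcal{A}$ be a unital $\mathbb{F}$-algebra with $\dim\mathcal{A}=n>4$, let $S$ be a generating set of $\mathcal{A}$, and let $(m_0,m_1,\ldots,m_{n-1})$ be the characteristic sequence of $S$. Then $m_{h+1}\le 2m_h$ for all $h$ with $2\le h\le n-2$.
   Context: Algebras are finite-dimensional, unital, not necessarily associative, over a field $\mathbb{F}$. For a finite generating set $S$ of $\mathcal{A}$, a word in $S$ is any product (with any bracketing) of finitely many elements of $S$; its length is the number of factors, and $1$ is a word of length $0$. $L_i(S)$ is the linear span of all words in $S$ of length at most $i$ (so $L_0(S)=\mathbb{F}$). The characteristic sequence of $S$ is the non-decreasing sequence $(m_0,\ldots,m_{n-1})$ constructed as follows: $m_0=0$; with $s_1=\dim L_1(S)-1$, set $m_1=\cdots=m_{s_1}=1$; inductively, if $m_1,\ldots,m_r$ are defined using $L_1(S),\ldots,L_{k-1}(S)$, put $s_k=\dim L_k(S)-\dim L_{k-1}(S)$ and set $m_{r+1}=\cdots=m_{r+s_k}=k$. (The sequence has $n=\dim\mathcal{A}$ terms.) *)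

theory Defs
  imports Main "HOL.Vector_Spaces"
begin

definition unital_algebra ::
  "('f::field \<Rightarrow> 'a::ab_group_add \<Rightarrow> 'a) \<Rightarrow> ('a \<Rightarrow> 'a \<Rightarrow> 'a) \<Rightarrow> 'a \<Rightarrow> bool" where
  "unital_algebra scale mult one \<longleftrightarrow>
     vector_space scale \<and>
     (\<forall>x y z. mult (x + y) z = mult x z + mult y z) \<and>
     (\<forall>x y z. mult x (y + z) = mult x y + mult x z) \<and>
     (\<forall>c x y. mult (scale c x) y = scale c (mult x y)) \<and>
     (\<forall>c x y. mult x (scale c y) = scale c (mult x y)) \<and>
     (\<forall>x. mult one x = x \<and> mult x one = x)"

inductive is_word :: "('a \<Rightarrow> 'a \<Rightarrow> 'a) \<Rightarrow> 'a \<Rightarrow> 'a set \<Rightarrow> 'a \<Rightarrow> nat \<Rightarrow> bool"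
  for mult one S where
  empty_word: "is_word mult one S one 0"
| gen_word: "s \<in> S \<Longrightarrow> is_word mult one S s 1"
| prod_word: "is_word mult one S u i \<Longrightarrow> is_word mult one S v j \<Longrightarrow> 1 \<le> i \<Longrightarrow> 1 \<le> j
              \<Longrightarrow> is_word mult one S (mult u v) (i + j)"

definition word_span ::
  "('f::field \<Rightarrow> 'a::ab_group_add \<Rightarrow> 'a) \<Rightarrow> ('a \<Rightarrow> 'a \<Rightarrow> 'a) \<Rightarrow> 'a \<Rightarrow> 'a set \<Rightarrow> nat \<Rightarrow> 'a set" where
  "word_span scale mult one S i = module.span scale {w. \<exists>k\<le>i. is_word mult one S w k}"

definition generates ::
  "('f::field \<Rightarrow> 'a::ab_group_add \<Rightarrow> 'a) \<Rightarrow> ('a \<Rightarrow> 'a \<Rightarrow> 'a) \<Rightarrow> 'a \<Rightarrow> 'a set \<Rightarrow> bool" where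
  "generates scale mult one S \<longleftrightarrow> module.span scale {w. \<exists>k. is_word mult one S w k} = UNIV"

text \<open>Characteristic sequence: the value k occurs exactly
  s_k = dim L_k - dim L_(k-1) times (with dim L_(-1) = 0), in non-decreasing order;
  equivalently the j-th term (j = 0..n-1) is the least k with dim L_k > j.\<close>

definition char_seq ::
  "('f::field \<Rightarrow> 'a::ab_group_add \<Rightarrow> 'a) \<Rightarrow> ('a \<Rightarrow> 'a \<Rightarrow> 'a) \<Rightarrow> 'a \<Rightarrow> 'a set \<Rightarrow> nat \<Rightarrow> nat" where
  "char_seq scale mult one S j = (LEAST k. j < vector_space.dim scale (word_span scale mult one S k))"

end

theory Submission
  imports Defs
begin

lemma word0: "is_word mult one S w 0 \<Longrightarrow> w = one"
  by (induction w "0::nat" rule: is_word.induct) auto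

theorem lemma3p9:
  fixes scale :: "'f::field \<Rightarrow> 'a::ab_group_add \<Rightarrow> 'a"
    and mult :: "'a \<Rightarrow> 'a \<Rightarrow> 'a" and one :: 'a and S :: "'a set" and n :: nat
  assumes "unital_algebra scale mult one"
    and "vector_space.dim scale (UNIV :: 'a set) = n"
    and "n > 4"
    and "finite S"
    and "generates scale mult one S"
  shows "\<forall>h. 2 \<le> h \<and> h \<le> n - 2 \<longrightarrow>
           char_seq scale mult one S (h + 1) \<le> 2 * char_seq scale mult one S h"
proof -
  have VS: "vector_space scale" using assms(1) unfolding unital_algebra_def by blast
  interpret V: vector_space scale by (rule VS)
  have addl: "mult (x + y) z = mult x z + mult y z" for x y z
    using assms(1) unfolding unital_algebra_def by blast
  have addr: "mult x (y + z) = mult x y + mult x z" for x y z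
    using assms(1) unfolding unital_algebra_def by blast
  have scl: "mult (scale c x) y = scale c (mult x y)" for c x y
    using assms(1) unfolding unital_algebra_def by blast
  have scr: "mult x (scale c y) = scale c (mult x y)" for c x y
    using assms(1) unfolding unital_algebra_def by blast
  have unl: "mult one x = x" for x
    using assms(1) unfolding unital_algebra_def by blast
  have unr: "mult x one = x" for x
    using assms(1) unfolding unital_algebra_def by blast
  have z1: "mult 0 y = 0" for y
    using addl[of 0 0 y] by simp
  have z2: "mult y 0 = 0" for y
    using addr[of y 0 0] by simp
  have bil: "mult x y \<in> V.span P"
    if x: "x \<in> V.span A" and y: "y \<in> V.span B" and P: "\<And>a b. a \<in> A \<Longrightarrow> b \<in> B \<Longrightarrow> mult a b \<in> V.span P"
    for x y A B P
  proof -
    have 1: "mult x b \<in> V.span P" if "b \<in> B" for b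
      using x
    proof (induction rule: V.span_induct_alt)
      case base then show ?case by (simp add: z1 V.span_zero)
    next
      case (step c a z)
      then show ?case using P[OF step(1) that]
        by (simp add: addl scl V.span_add V.span_scale)
    qed
    show ?thesis using y
    proof (induction rule: V.span_induct_alt)
      case base then show ?case by (simp add: z2 V.span_zero)
    next
      case (step c b z)
      then show ?case using 1[OF step(1)]
        by (simp add: addr scr V.span_add V.span_scale)
    qed
  qed
  obtain B where B: "V.independent B" "UNIV \<subseteq> V.span B" "card B = n"
    using V.basis_exists[of UNIV] assms(2) by metis
  have finB: "finite B" using B(3) assms(3) card.infinite by fastforce
  interpret F: finite_dimensional_vector_space scale B
    by unfold_locales (use B finB in auto)
  define L where "L k = word_span scale mult one S k" for k
  have Lsub: "V.subspace (L k)" for k unfolding L_def word_span_def by simp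
  have Lmono: "k \<le> m \<Longrightarrow> L k \<subseteq> L m" for k m
    unfolding L_def word_span_def by (rule V.span_mono) (auto intro: le_trans)
  have wordL: "is_word mult one S w j \<Longrightarrow> j \<le> k \<Longrightarrow> w \<in> L k" for w j k
    unfolding L_def word_span_def by (rule V.span_base) auto
  have dimL: "V.dim (L k) \<le> n" for k
    using F.dim_subset_UNIV[of "L k"] B(3) F.dimension_def by simp
  have key: "L k = UNIV" if k1: "1 \<le> k" and cl: "L (2*k) \<subseteq> L k" for k
  proof -
    have prod: "mult u v \<in> L k" if "u \<in> L k" "v \<in> L k" for u v
    proof -
      have "mult u v \<in> L (2*k)"
        unfolding L_def word_span_def
      proof (rule bil[where A="{w. \<exists>j\<le>k. is_word mult one S w j}" and B="{w. \<exists>j\<le>k. is_word mult one S w j}"])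
        show "u \<in> V.span {w. \<exists>j\<le>k. is_word mult one S w j}" using that(1) unfolding L_def word_span_def .
        show "v \<in> V.span {w. \<exists>j\<le>k. is_word mult one S w j}" using that(2) unfolding L_def word_span_def .
      next
        fix a b assume a: "a \<in> {w. \<exists>j\<le>k. is_word mult one S w j}" and b: "b \<in> {w. \<exists>j\<le>k. is_word mult one S w j}"
        then obtain i j where i: "i \<le> k" "is_word mult one S a i" and j: "j \<le> k" "is_word mult one S b j" by auto
        show "mult a b \<in> V.span {w. \<exists>ka\<le>2 * k. is_word mult one S w ka}"
        proof (cases "i = 0")
          case True
          then have "a = one" using i word0 by metis
          then show ?thesis using j by (intro V.span_base) (auto simp: unl intro!: exI[of _ j])
        next
          case False
          show ?thesis
          proof (cases "j = 0")
            case True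
            then have "b = one" using j word0 by metis
            then show ?thesis using i by (intro V.span_base) (auto simp: unr intro!: exI[of _ i])
          next
            case False
            have "is_word mult one S (mult a b) (i+j)"
              using i j False \<open>i \<noteq> 0\<close> by (intro is_word.prod_word) auto
            moreover have "i + j \<le> 2*k" using i j by simp
            ultimately show ?thesis by (intro V.span_base) blast
          qed
        qed
      qed
      then show ?thesis by (rule subsetD[OF cl])
    qed
    have "w \<in> L k" if "is_word mult one S w j" for w j
      using that
    proof (induction rule: is_word.induct)
      case empty_word then show ?case by (rule wordL[OF is_word.empty_word]) simp
    next
      case (gen_word s) then show ?case using k1 by (intro wordL[OF is_word.gen_word])
    next
      case (prod_word u i v j) then show ?case by (intro prod)
    qed
    then have "{w. \<exists>k. is_word mult one S w k} \<subseteq> L k" by auto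
    then have "V.span {w. \<exists>k. is_word mult one S w k} \<subseteq> L k"
      by (rule V.span_minimal[OF _ Lsub])
    then show ?thesis using assms(5) unfolding generates_def by (simp add: top_le)
  qed
  have dimUNIV: "V.dim (UNIV::'a set) = n" using assms(2) .
  have grow: "V.dim (L (2*k)) > V.dim (L k)" if "1 \<le> k" "V.dim (L k) < n" for k
  proof (rule ccontr)
    assume "\<not> ?thesis"
    then have e: "V.span (L k) = V.span (L (2*k))"
      using F.dim_eq_span[of "L k" "L (2*k)"] Lmono[of k "2*k"] by auto
    have sp: "V.span (L m) = L m" for m using Lsub[of m] by (simp only: V.span_eq_iff)
    have "L k = L (2*k)" using e by (simp only: sp)
    then have "L (2*k) \<subseteq> L k" by (rule equalityD2)
    then have "L k = UNIV" using key that by blast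
    then show False using that dimUNIV by simp
  qed
  have L0: "V.dim (L 0) \<le> 1"
  proof -
    have "{w. \<exists>j\<le>0. is_word mult one S w j} = {one}"
      using word0 is_word.empty_word by auto
    then have "L 0 = V.span {one}" unfolding L_def word_span_def by simp
    then show ?thesis using V.dim_le_card[of "L 0" "{one}"] by simp
  qed
  have ex: "\<exists>k. V.dim (L k) = n"
  proof -
    define M where "M = Max (range (\<lambda>k. V.dim (L k)))"
    have fin: "finite (range (\<lambda>k. V.dim (L k)))"
    proof (rule finite_subset)
      show "range (\<lambda>k. V.dim (L k)) \<subseteq> {..n}" using dimL by blast
    qed simp
    have "M \<in> range (\<lambda>k. V.dim (L k))" unfolding M_def using fin by (intro Max_in) auto
    then obtain k where k: "V.dim (L k) = M" by auto
    have kmax: "V.dim (L m) \<le> V.dim (L k)" for m unfolding k M_def by (rule Max_ge[OF fin]) blast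
    have "V.dim (L (Suc k)) = n"
    proof (rule ccontr)
      assume "V.dim (L (Suc k)) \<noteq> n"
      then have "V.dim (L (Suc k)) < n" using dimL le_neq_implies_less by blast
      then have "V.dim (L (2 * Suc k)) > V.dim (L (Suc k))" using grow[of "Suc k"] by (simp only: le_add1 Suc_eq_plus1_left)
      moreover have "V.dim (L (Suc k)) \<ge> V.dim (L k)"
        by (rule F.dim_subset[OF Lmono]) simp
      ultimately show False using kmax[of "2 * Suc k"] by simp
    qed
    then show ?thesis by blast
  qed
  show ?thesis
  proof (intro allI impI)
    fix h assume h: "2 \<le> h \<and> h \<le> n - 2"
    define k where "k = char_seq scale mult one S h"
    have kdef: "k = (LEAST k. h < V.dim (L k))" unfolding k_def char_seq_def L_def by simp
    obtain k0 where k0: "V.dim (L k0) = n" using ex by blast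
    have "h < n" using h assms(3) by linarith
    then have "h < V.dim (L k0)" using k0 by simp
    then have hk: "h < V.dim (L k)" unfolding kdef by (rule LeastI)
    have k1: "1 \<le> k" using hk L0 h by (cases k) auto
    have "h + 1 < V.dim (L (2*k))"
    proof (cases "V.dim (L k) < n")
      case True then show ?thesis using grow[OF k1] hk by simp
    next
      case False
      then have "V.dim (L k) = n" using dimL le_antisym not_less by blast
      moreover have "V.dim (L k) \<le> V.dim (L (2*k))" by (rule F.dim_subset[OF Lmono]) simp
      ultimately show ?thesis using h assms(3) by linarith
    qed
    then have "char_seq scale mult one S (h+1) \<le> 2*k"
      unfolding char_seq_def L_def by (rule Least_le)
    then show "char_seq scale mult one S (h + 1) \<le> 2 * char_seq scale mult one S h"
      unfolding k_def .
  qed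
qed

end
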